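(* Let $(X,d)$ be a metric space of bounded geometry and let $f:X\times\mathbb{R}^N\to\mathbb{R}^N$ be a continuous map such that: (1) $f|_{X\times\{w\}}$ is 1-Lipschitz for every $w\in\mathbb{R}^N$; (2) $f|_{\{x\}\times\mathbb{R}^N}:\mathbb{R}^N\to\mathbb{R}^N$ is proper and essential for every $x\in X$; (3) there is a function $c(r)$ such that $\operatorname{diam}_d\big(f^{-1}(B_r(0))\cap(X\times\{w\})\big)\le c(r)$ for all $w\in\mathbb{R}^N$ and $r>0$. Then no expander admits a coarse quasi-embedding into $X$.
   Context: A proper map $g:\mathbb{R}^N\to\mathbb{R}^N$ is essential if it induces a nonzero map on $H^N_c(\mathbb{R}^N;\mathbb{Q})$ (nonzero degree). Finite graphs are identified with their vertex sets with the edge-length-1 path metric; for $A\subset X$, $\partial A=\{x:\operatorname{dist}(x,A)=1\}$. An expander (conductance $c>0$, degree $d$) is a sequence of finite $d$-regular graphs $\{X_n\}$ with $|X_n|\to\infty$ and $|\partial A|\ge c|A|$ for all $A\subset X_n$ with $|A|\le|X_n|/2$. A coarse quasi-embedding of $\{X_n\}$ into a metric space $X$ is a sequence of 1-Lipschitz maps $\xi_n:X_n\to X$ together with a function $\rho:\mathbb{R}_+^2\to\mathbb{R}_+$ with $\lim_{t\to\infty}\rho(r,t)/t=0$ for every $r$, such that $|\xi_n^{-1}(B_r(x))|<\rho(r,|X_n|)$ for all $n$, all $r$ and all $x\in X$. *)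

theory Defs
  imports "HOL-Analysis.Analysis" "HOL-Homology.Homology"
begin

definition bounded_geometry :: "'a::metric_space set \<Rightarrow> bool" where
  "bounded_geometry X \<longleftrightarrow>
     (\<exists>\<epsilon>>0. \<forall>R>0. \<exists>N::nat. \<forall>x\<in>X. \<exists>C. finite C \<and> card C \<le> N \<and> C \<subseteq> X \<and>
        ball x R \<inter> X \<subseteq> (\<Union>c\<in>C. ball c \<epsilon>))"

text \<open>Essential proper map of R^N (N = CARD('n)): nonzero degree, expressed via the
  induced map on top relative homology at infinity
  H_N(R^N, R^N - cball 0 S) -> H_N(R^N, R^N - cball 0 R), where g^-1(cball 0 R) is
  contained in cball 0 S.\<close>
definition essential :: "(real^'n \<Rightarrow> real^'n) \<Rightarrow> bool" where
  "essential g \<longleftrightarrow>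
     (\<exists>R S. R > 0 \<and> g -` cball 0 R \<subseteq> cball 0 S \<and>
        (\<exists>c \<in> carrier (relative_homology_group (int CARD('n)) euclidean (- cball 0 S)).
           hom_induced (int CARD('n)) euclidean (- cball 0 S) euclidean (- cball 0 R) g c
             \<noteq> \<one>\<^bsub>relative_homology_group (int CARD('n)) euclidean (- cball 0 R)\<^esub>))"

definition graph_dist :: "'v set \<Rightarrow> ('v \<Rightarrow> 'v \<Rightarrow> bool) \<Rightarrow> 'v \<Rightarrow> 'v \<Rightarrow> real" where
  "graph_dist V E u v = real (LEAST k. \<exists>p::nat \<Rightarrow> 'v. p 0 = u \<and> p k = v \<and> p k \<in> V \<and>
        (\<forall>i<k. p i \<in> V \<and> E (p i) (p (Suc i))))"

definition graph_boundary :: "'v set \<Rightarrow> ('v \<Rightarrow> 'v \<Rightarrow> bool) \<Rightarrow> 'v set \<Rightarrow> 'v set" where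
  "graph_boundary V E A = {x \<in> V. graph_dist V E x ` A \<noteq> {} \<and> Inf (graph_dist V E x ` A) = 1}"

definition expander :: "(nat \<Rightarrow> 'v set) \<Rightarrow> (nat \<Rightarrow> 'v \<Rightarrow> 'v \<Rightarrow> bool) \<Rightarrow> real \<Rightarrow> nat \<Rightarrow> bool" where
  "expander V E c d \<longleftrightarrow> c > 0 \<and>
     (\<forall>n. finite (V n) \<and> (\<forall>u v. E n u v \<longrightarrow> u \<in> V n \<and> v \<in> V n \<and> E n v u \<and> u \<noteq> v) \<and>
          (\<forall>v\<in>V n. card {u \<in> V n. E n v u} = d) \<and>
          (\<forall>A \<subseteq> V n. real (card A) \<le> real (card (V n)) / 2 \<longrightarrow>
              real (card (graph_boundary (V n) (E n) A)) \<ge> c * real (card A))) \<and>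
     filterlim (\<lambda>n. card (V n)) at_top sequentially"

definition coarse_quasi_embedding ::
  "(nat \<Rightarrow> 'v set) \<Rightarrow> (nat \<Rightarrow> 'v \<Rightarrow> 'v \<Rightarrow> bool) \<Rightarrow> 'a::metric_space set \<Rightarrow> (nat \<Rightarrow> 'v \<Rightarrow> 'a) \<Rightarrow> bool" where
  "coarse_quasi_embedding V E X \<xi> \<longleftrightarrow>
     (\<forall>n. \<xi> n ` V n \<subseteq> X \<and>
          (\<forall>u\<in>V n. \<forall>v\<in>V n. dist (\<xi> n u) (\<xi> n v) \<le> graph_dist (V n) (E n) u v)) \<and>
     (\<exists>\<rho>::real \<Rightarrow> real \<Rightarrow> real.
        (\<forall>r>0. \<forall>t>0. \<rho> r t \<ge> 0) \<and>
        (\<forall>r>0. ((\<lambda>t. \<rho> r t / t) \<longlongrightarrow> 0) at_top) \<and>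
        (\<forall>n. \<forall>r>0. \<forall>x\<in>X. real (card {v \<in> V n. \<xi> n v \<in> ball x r}) < \<rho> r (real (card (V n)))))"

end

theory Submission
  imports Defs
begin


lemma sum_of_bool_ge:
  fixes t :: real
  shows "0 \<le> t \<Longrightarrow> t \<le> real K \<Longrightarrow> t \<le> (\<Sum>k<K. of_bool (real k < t))"
proof (induction K)
  case 0 then show ?case by simp
next
  case (Suc K)
  show ?case
  proof (cases "t \<le> real K")
    case True
    then have "t \<le> (\<Sum>k<K. of_bool (real k < t))" using Suc by auto
    then show ?thesis by simp
  next
    case False
    then have "(\<Sum>k<Suc K. of_bool (real k < t)) = (\<Sum>k<Suc K. (1::real))"
      by (intro sum.cong) auto
    then show ?thesis using Suc.prems by simp
  qed
qed

lemma one_side: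
  fixes V :: "'v set" and h :: "'v \<Rightarrow> real" and bd :: "'v set \<Rightarrow> 'v set"
  assumes fin: "finite V" and c: "c > 0"
    and bdp: "\<And>A x. A \<subseteq> V \<Longrightarrow> x \<in> bd A \<Longrightarrow> x \<in> V \<and> x \<notin> A \<and> (\<exists>y\<in>A. h x \<le> h y + 1)"
    and ex: "\<And>A. A \<subseteq> V \<Longrightarrow> real (card A) \<le> real (card V) / 2 \<Longrightarrow> real (card (bd A)) \<ge> c * real (card A)"
    and half: "real (card {v\<in>V. h v < a}) \<le> real (card V) / 2"
  shows "(\<Sum>v\<in>V. max 0 (a - h v)) \<le> real (card V) / 2 * ((1 + c) / c)"
proof -
  define M where "M = real (card V)"
  define B where "B k = {v\<in>V. h v < a - real k}" for k :: nat
  define q where "q = 1 / (1 + c)"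
  have q0: "0 < q" "q < 1" using c by (auto simp: q_def)
  have BV: "B k \<subseteq> V" for k by (auto simp: B_def)
  have finB: "finite (B k)" for k using BV fin finite_subset by blast
  have Bmono: "B (Suc k) \<subseteq> B k" for k by (auto simp: B_def)
  have B0: "real (card (B k)) \<le> M / 2" for k
  proof -
    have "B k \<subseteq> B 0" by (auto simp: B_def)
    then have "card (B k) \<le> card (B 0)" using finB card_mono by blast
    moreover have "B 0 = {v\<in>V. h v < a}" by (simp add: B_def)
    ultimately show ?thesis using half by (simp add: M_def)
  qed
  have step: "(1 + c) * real (card (B (Suc k))) \<le> real (card (B k))" for k
  proof -
    let ?A = "B (Suc k)"
    have bdsub: "bd ?A \<subseteq> B k - ?A"
    proof
      fix x assume x: "x \<in> bd ?A"
      from bdp[OF BV x] obtain y where "x \<in> V" "x \<notin> ?A" "y \<in> ?A" "h x \<le> h y + 1" by blast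
      then show "x \<in> B k - ?A" by (auto simp: B_def)
    qed
    have "card (?A \<union> bd ?A) = card ?A + card (bd ?A)"
      using bdsub finB by (intro card_Un_disjoint) (auto intro: finite_subset)
    moreover have "card (?A \<union> bd ?A) \<le> card (B k)"
      using bdsub Bmono finB by (intro card_mono) auto
    moreover have "real (card (bd ?A)) \<ge> c * real (card ?A)"
      using ex[OF BV] B0[of "Suc k"] by (simp add: M_def)
    ultimately show ?thesis by (simp add: algebra_simps)
  qed
  have cardB: "real (card (B k)) \<le> M / 2 * q ^ k" for k
  proof (induction k)
    case 0 then show ?case using B0[of 0] by simp
  next
    case (Suc k)
    have "real (card (B (Suc k))) \<le> real (card (B k)) * q"
      using step[of k] c by (simp add: q_def field_simps)
    also have "\<dots> \<le> M / 2 * q ^ k * q" using Suc q0 by (intro mult_right_mono) auto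
    finally show ?case by (simp add: mult.commute mult.left_commute)
  qed
  define K where "K = nat \<lceil>\<Sum>v\<in>V. max 0 (a - h v)\<rceil>"
  have pt: "max 0 (a - h v) \<le> (\<Sum>k<K. of_bool (v \<in> B k))" if v: "v \<in> V" for v
  proof -
    have "max 0 (a - h v) \<le> (\<Sum>v\<in>V. max 0 (a - h v))"
      using v fin by (intro member_le_sum) auto
    also have "\<dots> \<le> real K" unfolding K_def by linarith
    finally have "max 0 (a - h v) \<le> (\<Sum>k<K. of_bool (real k < max 0 (a - h v)))"
      by (intro sum_of_bool_ge) auto
    also have "\<dots> = (\<Sum>k<K. of_bool (v \<in> B k))"
      using v by (intro sum.cong) (auto simp: B_def)
    finally show ?thesis .
  qed
  have "(\<Sum>v\<in>V. max 0 (a - h v)) \<le> (\<Sum>v\<in>V. \<Sum>k<K. of_bool (v \<in> B k))"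
    using pt by (intro sum_mono) auto
  also have "\<dots> = (\<Sum>k<K. \<Sum>v\<in>V. of_bool (v \<in> B k))"
    by (rule sum.swap)
  also have "\<dots> = (\<Sum>k<K. real (card (B k)))"
  proof (intro sum.cong refl)
    fix k
    have "(\<Sum>v\<in>V. of_bool (v \<in> B k) :: real) = real (card (V \<inter> {v. v \<in> B k}))"
      using fin by (simp add: sum_of_bool_eq)
    also have "V \<inter> {v. v \<in> B k} = B k" using BV by auto
    finally show "(\<Sum>v\<in>V. of_bool (v \<in> B k) :: real) = real (card (B k))" .
  qed
  also have "\<dots> \<le> (\<Sum>k<K. M / 2 * q ^ k)" by (intro sum_mono cardB)
  also have "\<dots> = M / 2 * (\<Sum>k<K. q ^ k)" by (simp add: sum_distrib_left)
  also have "\<dots> = M / 2 * ((1 - q ^ K) / (1 - q))"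
    using q0 by (simp add: sum_gp_strict)
  also have "\<dots> \<le> M / 2 * (1 / (1 - q))"
    using q0 by (intro mult_left_mono divide_right_mono) (auto simp: M_def)
  also have "1 / (1 - q) = (1 + c) / c" using c by (simp add: q_def field_simps)
  finally show ?thesis by (simp add: M_def)
qed

lemma median_exists:
  fixes V :: "'v set" and h :: "'v \<Rightarrow> real"
  assumes fin: "finite V" and ne: "V \<noteq> {}"
  shows "\<exists>a. real (card {v\<in>V. h v < a}) \<le> real (card V) / 2 \<and> real (card {v\<in>V. a < h v}) \<le> real (card V) / 2"
proof -
  define P where "P b \<longleftrightarrow> real (card {v\<in>V. h v \<le> b}) \<ge> real (card V) / 2" for b
  define Hs where "Hs = {b \<in> h ` V. P b}"
  have finH: "finite Hs" using fin by (simp add: Hs_def)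
  have "Max (h ` V) \<in> Hs"
  proof -
    have "{v\<in>V. h v \<le> Max (h ` V)} = V" using fin by auto
    then show ?thesis using fin ne by (simp add: Hs_def P_def)
  qed
  then have neH: "Hs \<noteq> {}" by blast
  define a where "a = Min Hs"
  have aH: "a \<in> Hs" using finH neH by (simp add: a_def)
  have amin: "a \<le> b" if "b \<in> Hs" for b using finH that by (simp add: a_def)
  have up: "real (card {v\<in>V. a < h v}) \<le> real (card V) / 2"
  proof -
    have "{v\<in>V. a < h v} = V - {v\<in>V. h v \<le> a}" by auto
    then have "card {v\<in>V. a < h v} = card V - card {v\<in>V. h v \<le> a}"
      using fin by (simp add: card_Diff_subset)
    moreover have "card {v\<in>V. h v \<le> a} \<le> card V" using fin by (intro card_mono) auto
    moreover have "P a" using aH by (simp add: Hs_def)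
    ultimately show ?thesis by (simp add: P_def of_nat_diff)
  qed
  have low: "real (card {v\<in>V. h v < a}) \<le> real (card V) / 2"
  proof (cases "{v\<in>V. h v < a} = {}")
    case True then show ?thesis by (simp only: True card.empty)
  next
    case False
    define b where "b = Max (h ` {v\<in>V. h v < a})"
    have fl: "finite (h ` {v\<in>V. h v < a})" using fin by simp
    have "b \<in> h ` {v\<in>V. h v < a}" using fl False by (simp add: b_def)
    then have bV: "b \<in> h ` V" and ba: "b < a" by auto
    have "\<not> P b" using amin[of b] bV ba by (auto simp: Hs_def)
    moreover have "{v\<in>V. h v < a} = {v\<in>V. h v \<le> b}"
    proof
      show "{v\<in>V. h v < a} \<subseteq> {v\<in>V. h v \<le> b}" using fl by (auto simp: b_def)
      show "{v\<in>V. h v \<le> b} \<subseteq> {v\<in>V. h v < a}" using ba by auto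
    qed
    ultimately show ?thesis by (simp add: P_def)
  qed
  from up low show ?thesis by blast
qed

lemma two_side:
  fixes V :: "'v set" and h :: "'v \<Rightarrow> real" and bd :: "'v set \<Rightarrow> 'v set"
  assumes fin: "finite V" and ne: "V \<noteq> {}" and c: "c > 0"
    and bdp: "\<And>A x. A \<subseteq> V \<Longrightarrow> x \<in> bd A \<Longrightarrow> x \<in> V \<and> x \<notin> A \<and> (\<exists>y\<in>A. \<bar>h x - h y\<bar> \<le> 1)"
    and ex: "\<And>A. A \<subseteq> V \<Longrightarrow> real (card A) \<le> real (card V) / 2 \<Longrightarrow> real (card (bd A)) \<ge> c * real (card A)"
  shows "(\<Sum>v\<in>V. \<bar>h v - (\<Sum>u\<in>V. h u) / real (card V)\<bar>) \<le> 2 * real (card V) * ((1 + c) / c)"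
proof -
  define M where "M = real (card V)"
  have M0: "M > 0" using fin ne by (simp add: M_def card_gt_0_iff)
  define K where "K = (1 + c) / c"
  obtain a where a1: "real (card {v\<in>V. h v < a}) \<le> M / 2" and a2: "real (card {v\<in>V. a < h v}) \<le> M / 2"
    using median_exists[OF fin ne, of h] by (auto simp: M_def)
  have bdp1: "x \<in> V \<and> x \<notin> A \<and> (\<exists>y\<in>A. h x \<le> h y + 1)" if "A \<subseteq> V" "x \<in> bd A" for A x
  proof -
    from bdp[OF that] obtain y where "x \<in> V" "x \<notin> A" "y \<in> A" "\<bar>h x - h y\<bar> \<le> 1" by blast
    moreover have "h x \<le> h y + 1" using \<open>\<bar>h x - h y\<bar> \<le> 1\<close> by (simp add: abs_le_iff)
    ultimately show ?thesis by blast
  qed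
  have bdp2: "x \<in> V \<and> x \<notin> A \<and> (\<exists>y\<in>A. - h x \<le> - h y + 1)" if "A \<subseteq> V" "x \<in> bd A" for A x
  proof -
    from bdp[OF that] obtain y where "x \<in> V" "x \<notin> A" "y \<in> A" "\<bar>h x - h y\<bar> \<le> 1" by blast
    moreover have "- h x \<le> - h y + 1" using \<open>\<bar>h x - h y\<bar> \<le> 1\<close> by (simp add: abs_le_iff)
    ultimately show ?thesis by blast
  qed
  have s1: "(\<Sum>v\<in>V. max 0 (a - h v)) \<le> M / 2 * K"
    unfolding M_def K_def
    by (rule one_side[OF fin c bdp1 ex a1[unfolded M_def]])
  have a2': "real (card {v\<in>V. (\<lambda>v. - h v) v < - a}) \<le> M / 2" using a2 by simp
  have s2: "(\<Sum>v\<in>V. max 0 (- a - (- h v))) \<le> M / 2 * K"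
    unfolding M_def K_def
    by (rule one_side[where h="\<lambda>v. - h v", OF fin c bdp2 ex a2'[unfolded M_def]])
  have sa: "(\<Sum>v\<in>V. \<bar>h v - a\<bar>) \<le> M * K"
  proof -
    have "(\<Sum>v\<in>V. \<bar>h v - a\<bar>) = (\<Sum>v\<in>V. max 0 (a - h v) + max 0 (- a - (- h v)))"
      by (intro sum.cong) auto
    also have "\<dots> = (\<Sum>v\<in>V. max 0 (a - h v)) + (\<Sum>v\<in>V. max 0 (- a - (- h v)))"
      by (rule sum.distrib)
    finally show ?thesis using s1 s2 by simp
  qed
  define m where "m = (\<Sum>u\<in>V. h u) / M"
  have "\<bar>m - a\<bar> = \<bar>(\<Sum>u\<in>V. h u - a)\<bar> / M"
    using M0 by (simp add: m_def sum_subtractf M_def field_simps)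
  also have "\<dots> \<le> (\<Sum>u\<in>V. \<bar>h u - a\<bar>) / M"
    using M0 by (intro divide_right_mono sum_abs) auto
  also have "\<dots> \<le> K" using sa M0 by (simp add: field_simps)
  finally have ma: "\<bar>m - a\<bar> \<le> K" .
  have "(\<Sum>v\<in>V. \<bar>h v - m\<bar>) \<le> (\<Sum>v\<in>V. \<bar>h v - a\<bar> + K)"
    using ma by (intro sum_mono) linarith
  also have "\<dots> = (\<Sum>v\<in>V. \<bar>h v - a\<bar>) + M * K" by (simp add: sum.distrib M_def)
  also have "\<dots> \<le> 2 * M * K" using sa by linarith
  finally show ?thesis by (simp add: m_def M_def K_def)
qed



lemma homot_eucl:
  fixes h :: "real \<times> 'a::real_normed_vector \<Rightarrow> 'b::real_normed_vector"
  assumes "continuous_on ({0..1} \<times> UNIV) h" "\<And>x. h (0,x) = f x" "\<And>x. h (1,x) = g x"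
    "\<And>t. t \<in> {0..1} \<Longrightarrow> P (\<lambda>x. h (t,x))"
  shows "homotopic_with P euclidean euclidean f g"
  unfolding homotopic_with_def
proof (intro exI conjI allI ballI)
  have "prod_topology (top_of_set {0..1::real}) (euclidean::'a topology) = top_of_set ({0..1::real} \<times> UNIV)"
    using subtopology_Times[of euclidean euclidean "{0..1::real}" "UNIV::'a set"]
    by (simp add: euclidean_product_topology)
  then show "continuous_map (prod_topology (top_of_set {0..1}) euclidean) euclidean h"
    using assms(1) by (simp add: continuous_map_iff_continuous)
qed (use assms in auto)

lemma lemmaA:
  fixes k :: "real^'n \<Rightarrow> real^'n"
  assumes ck: "continuous_on UNIV k" and nz: "\<And>w. k w \<noteq> 0"
    and im: "k \<in> (- cball 0 S) \<rightarrow> (- cball 0 R)"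
  shows "hom_induced p euclidean (- cball 0 S) euclidean (- cball 0 R) k x
         = \<one>\<^bsub>relative_homology_group p euclidean (- cball 0 R)\<^esub>"
proof -
  define a where "a = \<bar>R\<bar> + 1"
  define h where "h = (\<lambda>(t::real, w). k w + (t * a / norm (k w)) *\<^sub>R k w)"
  define k1 where "k1 = (\<lambda>w. h (1, w))"
  have nh: "norm (h (t, w)) = norm (k w) + t * a" if "t \<ge> 0" for t w
  proof -
    have "h (t, w) = (1 + t * a / norm (k w)) *\<^sub>R k w"
      by (simp add: h_def algebra_simps)
    moreover have "1 + t * a / norm (k w) \<ge> 0"
      using that by (simp add: a_def)
    ultimately have "norm (h (t,w)) = (1 + t * a / norm (k w)) * norm (k w)" by simp
    also have "\<dots> = norm (k w) + t * a" using nz[of w] by (simp add: field_simps)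
    finally show ?thesis .
  qed
  have "homotopic_with (\<lambda>q. q \<in> (- cball 0 S) \<rightarrow> (- cball 0 R)) euclidean euclidean k k1"
  proof (rule homot_eucl[where h = h])
    show "continuous_on ({0..1} \<times> UNIV) h"
      unfolding h_def case_prod_unfold
      by (intro continuous_intros continuous_on_compose2[OF ck]) (auto simp: nz)
    show "h (0, x) = k x" for x by (simp add: h_def)
    show "h (1, x) = k1 x" for x by (simp add: k1_def)
    fix t :: real assume "t \<in> {0..1}"
    show "(\<lambda>x. h (t, x)) \<in> - cball 0 S \<rightarrow> - cball 0 R"
    proof
      fix y :: "real^'n" assume "y \<in> - cball 0 S"
      then have "k y \<in> - cball 0 R" using im by blast
      then have "norm (k y) > R" by simp
      moreover have "norm (h (t, y)) = norm (k y) + t * a" using nh \<open>t \<in> {0..1}\<close> by auto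
      moreover have "t * a \<ge> 0" using \<open>t \<in> {0..1}\<close> by (simp add: a_def)
      ultimately show "h (t, y) \<in> - cball 0 R" by simp
    qed
  qed
  then have eq: "hom_induced p euclidean (- cball 0 S) euclidean (- cball 0 R) k
      = hom_induced p euclidean (- cball 0 S) euclidean (- cball 0 R) k1"
    by (rule homology_homotopy_axiom)
  define Y where "Y = subtopology (euclidean :: (real^'n) topology) (- cball 0 R)"
  have tY: "topspace Y = - cball 0 R" by (simp add: Y_def)
  have k1im: "k1 w \<in> - cball 0 R" for w
    using nh[of 1 w] unfolding k1_def a_def apply simp using norm_ge_zero[of "k w"] abs_ge_self[of R] by linarith
  have ck1: "continuous_map euclidean Y k1"
  proof -
    have "continuous_on UNIV k1"
      unfolding k1_def h_def by (simp, intro continuous_intros ck) (auto simp: nz)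
    then show ?thesis
      unfolding Y_def using k1im
      by (auto simp: continuous_map_in_subtopology continuous_map_iff_continuous)
  qed
  have cid: "continuous_map Y euclidean id"
    by (simp add: Y_def continuous_map_from_subtopology)
  have "hom_induced p euclidean (- cball 0 S) euclidean (- cball 0 R) (id \<circ> k1)
      = hom_induced p Y (- cball 0 R) euclidean (- cball 0 R) id \<circ> hom_induced p euclidean (- cball 0 S) Y (- cball 0 R) k1"
    by (rule hom_induced_compose) (use ck1 cid k1im in auto)
  moreover have "hom_induced p euclidean (- cball 0 S) Y (- cball 0 R) k1 x = \<one>\<^bsub>relative_homology_group p Y (- cball 0 R)\<^esub>"
  proof -
    have "trivial_group (relative_homology_group p Y (topspace Y))"
      by (rule trivial_relative_homology_group_topspace)
    then have "carrier (relative_homology_group p Y (- cball 0 R)) = {\<one>\<^bsub>relative_homology_group p Y (- cball 0 R)\<^esub>}"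
      by (simp add: tY trivial_group_def)
    moreover have "hom_induced p euclidean (- cball 0 S) Y (- cball 0 R) k1 x \<in> carrier (relative_homology_group p Y (- cball 0 R))"
      by (rule hom_induced_carrier)
    ultimately show ?thesis by blast
  qed
  moreover have "hom_induced p Y (- cball 0 R) euclidean (- cball 0 R) id \<one>\<^bsub>relative_homology_group p Y (- cball 0 R)\<^esub> = \<one>\<^bsub>relative_homology_group p euclidean (- cball 0 R)\<^esub>"
    by (rule hom_one[OF hom_induced_hom]) (simp_all add: group.intro)
  ultimately show ?thesis using eq by (simp add: comp_def)
qed

lemma essential_zero:
  fixes g F :: "real^'n \<Rightarrow> real^'n"
  assumes cg: "continuous_on UNIV g" and pg: "proper_map euclidean euclidean g" and ess: "essential g"
    and cF: "continuous_on UNIV F" and bd: "\<And>w. norm (F w - g w) \<le> D"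
  shows "\<exists>w. F w = 0"
proof (rule ccontr)
  assume "\<not> ?thesis" then have nz: "\<And>w. F w \<noteq> 0" by auto
  let ?p = "int CARD('n)"
  from ess obtain R S c where R: "R > 0" and sub: "g -` cball 0 R \<subseteq> cball 0 S"
    and ne: "hom_induced ?p euclidean (- cball 0 S) euclidean (- cball 0 R) g c
       \<noteq> \<one>\<^bsub>relative_homology_group ?p euclidean (- cball 0 R)\<^esub>"
    unfolding essential_def by blast
  have gim: "g \<in> - cball 0 S \<rightarrow> - cball 0 R" using sub by auto
  have D0: "D \<ge> 0" using bd[of 0] norm_ge_zero[of "F 0 - g 0"] by linarith
  show False
  proof (cases "S > 0")
    case False
    have "g w \<noteq> 0" for w
    proof
      assume g0: "g w = 0"
      then have "w \<in> g -` cball 0 R" using R by simp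
      then have "w \<in> cball 0 S" using sub by blast
      then have nw: "norm w \<le> S" by simp
      have S0: "S = 0" using nw False norm_ge_zero[of w] by linarith
      have w0: "w = 0" using nw S0 by simp
      have "isCont g 0" using cg by (simp add: continuous_on_eq_continuous_at)
      then obtain e where e: "e > 0" and "\<forall>y. dist y 0 < e \<longrightarrow> dist (g y) (g 0) < R"
        using R unfolding continuous_at_eps_delta by blast
      moreover define y :: "real^'n" where "y = (e/2) *\<^sub>R axis undefined 1"
      moreover have ny: "norm y = e/2" using e by (simp add: y_def)
      ultimately have "dist (g y) 0 < R" using g0 S0 w0 by (simp add: dist_norm)
      then have "y \<in> g -` cball 0 R" by (simp add: dist_norm)
      then have "y \<in> cball 0 S" using sub by blast
      with S0 w0 ny e show False by simp
    qed
    then have "hom_induced ?p euclidean (- cball 0 S) euclidean (- cball 0 R) g c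
       = \<one>\<^bsub>relative_homology_group ?p euclidean (- cball 0 R)\<^esub>"
      by (intro lemmaA[OF cg _ gim])
    with ne show False by simp
  next
    case True
    have "\<forall>K. compact K \<longrightarrow> compact {x. g x \<in> K}" using pg unfolding proper_map_alt by simp
    then have "compact {x. g x \<in> cball 0 (R + D)}" using compact_cball by blast
    then have "compact (g -` cball 0 (R + D))" by (simp only: vimage_def)
    then have "bounded (g -` cball 0 (R + D))" by (rule compact_imp_bounded)
    then obtain T where T: "\<And>x. x \<in> g -` cball 0 (R + D) \<Longrightarrow> norm x \<le> T"
      unfolding bounded_pos by blast
    define l where "l = max 1 (T / S)"
    have l1: "l \<ge> 1" by (simp add: l_def)
    have "T / S \<le> l" by (simp add: l_def)
    then have lS: "l * S \<ge> T" using True by (simp add: pos_divide_le_eq)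
    define P where "P = (\<lambda>q::real^'n \<Rightarrow> real^'n. q \<in> - cball 0 S \<rightarrow> - cball 0 R)"
    have h1: "homotopic_with P euclidean euclidean g (\<lambda>w. g (l *\<^sub>R w))"
    proof (rule homot_eucl[where h = "\<lambda>(t, w). g ((1 + t * (l - 1)) *\<^sub>R w)"])
      show "continuous_on ({0..1} \<times> UNIV) (\<lambda>(t, w). g ((1 + t * (l - 1)) *\<^sub>R w))"
        unfolding case_prod_unfold
        by (intro continuous_intros continuous_on_compose2[OF cg]) auto
      fix t :: real assume t: "t \<in> {0..1}"
      show "P (\<lambda>x. case (t, x) of (t, w) \<Rightarrow> g ((1 + t * (l - 1)) *\<^sub>R w))"
        unfolding P_def
      proof
        fix y :: "real^'n" assume y: "y \<in> - cball 0 S"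
        have m: "1 + t * (l - 1) \<ge> 1" using t l1 by auto
        have "norm ((1 + t * (l - 1)) *\<^sub>R y) = (1 + t * (l - 1)) * norm y" using m by simp
        also have "\<dots> \<ge> norm y" using m by (simp add: mult_le_cancel_right1)
        finally have "(1 + t * (l - 1)) *\<^sub>R y \<notin> cball 0 S" using y by auto
        then show "(\<lambda>x. case (t, x) of (t, w) \<Rightarrow> g ((1 + t * (l - 1)) *\<^sub>R w)) y \<in> - cball 0 R"
          using sub by auto
      qed
    qed simp_all
    have far: "norm (g (l *\<^sub>R y)) > R + D" if y: "y \<in> - cball 0 S" for y
    proof -
      have "norm (l *\<^sub>R y) = l * norm y" using l1 by simp
      also have "\<dots> > l * S" using y l1 by simp
      finally have "norm (l *\<^sub>R y) > T" using lS by simp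
      then have "l *\<^sub>R y \<notin> g -` cball 0 (R + D)" using T by force
      then show ?thesis by simp
    qed
    have h2: "homotopic_with P euclidean euclidean (\<lambda>w. g (l *\<^sub>R w)) (\<lambda>w. F (l *\<^sub>R w))"
    proof (rule homot_eucl[where h = "\<lambda>(t, w). (1 - t) *\<^sub>R g (l *\<^sub>R w) + t *\<^sub>R F (l *\<^sub>R w)"])
      show "continuous_on ({0..1} \<times> UNIV) (\<lambda>(t, w). (1 - t) *\<^sub>R g (l *\<^sub>R w) + t *\<^sub>R F (l *\<^sub>R w))"
        unfolding case_prod_unfold
        by (intro continuous_intros continuous_on_compose2[OF cg] continuous_on_compose2[OF cF]) auto
      fix t :: real assume t: "t \<in> {0..1}"
      show "P (\<lambda>x. case (t, x) of (t, w) \<Rightarrow> (1 - t) *\<^sub>R g (l *\<^sub>R w) + t *\<^sub>R F (l *\<^sub>R w))"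
        unfolding P_def
      proof
        fix y :: "real^'n" assume y: "y \<in> - cball 0 S"
        let ?a = "g (l *\<^sub>R y)" and ?b = "F (l *\<^sub>R y)"
        have e: "(1 - t) *\<^sub>R ?a + t *\<^sub>R ?b = ?a + t *\<^sub>R (?b - ?a)" by (simp add: algebra_simps)
        have "norm (t *\<^sub>R (?b - ?a)) = t * norm (?b - ?a)" using t by simp
        also have "\<dots> \<le> 1 * D" using t bd[of "l *\<^sub>R y"] D0 by (intro mult_mono) auto
        finally have "norm (t *\<^sub>R (?b - ?a)) \<le> D" by simp
        moreover have "norm ?a > R + D" using far y by blast
        moreover have "norm ?a \<le> norm (?a + t *\<^sub>R (?b - ?a)) + norm (t *\<^sub>R (?b - ?a))"
          by (metis add_diff_cancel norm_triangle_ineq4)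
        ultimately have "norm (?a + t *\<^sub>R (?b - ?a)) > R" by linarith
        then show "(\<lambda>x. case (t, x) of (t, w) \<Rightarrow> (1 - t) *\<^sub>R g (l *\<^sub>R w) + t *\<^sub>R F (l *\<^sub>R w)) y \<in> - cball 0 R"
          using e by simp
      qed
    qed simp_all
    have Pk: "P (\<lambda>w. F (l *\<^sub>R w))" using homotopic_with_imp_property[OF h2] by blast
    have eqH: "hom_induced ?p euclidean (- cball 0 S) euclidean (- cball 0 R) g
        = hom_induced ?p euclidean (- cball 0 S) euclidean (- cball 0 R) (\<lambda>w. F (l *\<^sub>R w))"
      by (rule trans[OF homology_homotopy_axiom[OF h1[unfolded P_def]] homology_homotopy_axiom[OF h2[unfolded P_def]]])
    have "hom_induced ?p euclidean (- cball 0 S) euclidean (- cball 0 R) (\<lambda>w. F (l *\<^sub>R w)) c = \<one>\<^bsub>relative_homology_group ?p euclidean (- cball 0 R)\<^esub>"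
    proof (rule lemmaA)
      show "continuous_on UNIV (\<lambda>w. F (l *\<^sub>R w))"
        by (intro continuous_intros continuous_on_compose2[OF cF]) auto
      show "\<And>w. F (l *\<^sub>R w) \<noteq> 0" using nz by blast
      show "(\<lambda>w. F (l *\<^sub>R w)) \<in> - cball 0 S \<rightarrow> - cball 0 R" using Pk by (simp add: P_def)
    qed
    then show False using ne eqH by simp
  qed
qed

lemma gd_self:
  fixes x :: 'v and V :: "'v set"
  assumes "x \<in> V"
  shows "graph_dist V E x x = 0"
proof -
  have "(LEAST k. \<exists>p::nat \<Rightarrow> 'v. p 0 = x \<and> p k = x \<and> p k \<in> V \<and>
        (\<forall>i<k. p i \<in> V \<and> E (p i) (p (Suc i)))) \<le> 0"
    by (rule Least_le) (rule exI[of _ "\<lambda>_. x"], use assms in simp)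
  then show ?thesis unfolding graph_dist_def by simp
qed

lemma bd_prop:
  assumes fin: "finite V" and A: "A \<subseteq> V" and x: "x \<in> graph_boundary V E A"
  shows "x \<in> V \<and> x \<notin> A \<and> (\<exists>y\<in>A. graph_dist V E x y = 1)"
proof -
  have xV: "x \<in> V" and ne: "graph_dist V E x ` A \<noteq> {}" and I: "Inf (graph_dist V E x ` A) = 1"
    using x by (auto simp: graph_boundary_def)
  have finA: "finite (graph_dist V E x ` A)" using fin A finite_subset by blast
  have IM: "Inf (graph_dist V E x ` A) = Min (graph_dist V E x ` A)"
    using finA ne by (rule cInf_eq_Min)
  have "Min (graph_dist V E x ` A) \<in> graph_dist V E x ` A" using finA ne by (rule Min_in)
  then obtain y where y: "y \<in> A" "graph_dist V E x y = 1" using I IM by auto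
  have "x \<notin> A"
  proof
    assume "x \<in> A"
    then have "Min (graph_dist V E x ` A) \<le> graph_dist V E x x" using finA by simp
    then show False using I IM gd_self[OF xV, of E] by simp
  qed
  then show ?thesis using xV y by blast
qed

theorem lemma3:
  fixes X :: "'a::metric_space set"
    and f :: "'a \<Rightarrow> real^'n \<Rightarrow> real^'n"
    and c :: "real \<Rightarrow> real"
  assumes "bounded_geometry X"
    and "continuous_on (X \<times> UNIV) (\<lambda>(x, w). f x w)"
    and "\<And>w. 1-lipschitz_on X (\<lambda>x. f x w)"
    and "\<And>x. x \<in> X \<Longrightarrow> proper_map euclidean euclidean (f x) \<and> essential (f x)"
    and "\<And>w r. r > 0 \<Longrightarrow> \<forall>x\<in>X. \<forall>y\<in>X. f x w \<in> ball 0 r \<and> f y w \<in> ball 0 r \<longrightarrow> dist x y \<le> c r"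
  shows "\<not> (\<exists>(V :: nat \<Rightarrow> 'v set) E cc d \<xi>. expander V E cc d \<and> coarse_quasi_embedding V E X \<xi>)"
proof
  assume "\<exists>(V :: nat \<Rightarrow> 'v set) E cc d \<xi>. expander V E cc d \<and> coarse_quasi_embedding V E X \<xi>"
  then obtain V :: "nat \<Rightarrow> 'v set" and E cc d \<xi> where exp: "expander V E cc d"
    and cqe: "coarse_quasi_embedding V E X \<xi>" by blast
  have cc: "cc > 0" and finV: "\<And>n. finite (V n)"
    and expa: "\<And>n A. A \<subseteq> V n \<Longrightarrow> real (card A) \<le> real (card (V n)) / 2 \<Longrightarrow>
        real (card (graph_boundary (V n) (E n) A)) \<ge> cc * real (card A)"
    and lim: "filterlim (\<lambda>n. card (V n)) at_top sequentially"
    using exp unfolding expander_def by auto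
  have \<xi>X: "\<And>n v. v \<in> V n \<Longrightarrow> \<xi> n v \<in> X"
    and \<xi>L: "\<And>n u v. u \<in> V n \<Longrightarrow> v \<in> V n \<Longrightarrow> dist (\<xi> n u) (\<xi> n v) \<le> graph_dist (V n) (E n) u v"
    using cqe unfolding coarse_quasi_embedding_def by blast+
  obtain \<rho> :: "real \<Rightarrow> real \<Rightarrow> real" where
    \<rho>lim: "\<And>r. r > 0 \<Longrightarrow> ((\<lambda>t. \<rho> r t / t) \<longlongrightarrow> 0) at_top"
    and \<rho>b: "\<And>n r x. r > 0 \<Longrightarrow> x \<in> X \<Longrightarrow> real (card {v \<in> V n. \<xi> n v \<in> ball x r}) < \<rho> r (real (card (V n)))"
    using cqe unfolding coarse_quasi_embedding_def by blast
  have fcont: "continuous_on UNIV (f x)" if "x \<in> X" for x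
  proof -
    have "continuous_on UNIV (\<lambda>w. (\<lambda>(x, w). f x w) (x, w))"
      by (rule continuous_on_compose2[OF assms(2) continuous_on_Pair[OF continuous_on_const continuous_on_id]])
        (use that in auto)
    then show ?thesis by simp
  qed
  have lip: "dist (f x w) (f y w) \<le> dist x y" if "x \<in> X" "y \<in> X" for x y w
    using lipschitz_onD[OF assms(3) that] by simp
  define N where "N = real CARD('n)"
  have N0: "N > 0" by (simp add: N_def)
  define K0 where "K0 = 2 * ((1 + cc) / cc)"
  have K00: "K0 > 0" using cc by (simp add: K0_def)
  define T where "T = 4 * N * K0 + 1"
  have NK: "N * K0 > 0" using N0 K00 by simp
  have T4: "T = 4 * (N * K0) + 1" by (simp add: T_def mult.assoc)
  have T0: "T > 0" using NK T4 by linarith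
  define r where "r = N * T + 1"
  have r0: "r > 0" using mult_pos_pos[OF N0 T0] by (simp add: r_def)
  define r' where "r' = max (c r) 0 + 1"
  have r'0: "r' > 0" by (simp add: r'_def)
  have key: "real (card (V n)) / 2 < \<rho> r' (real (card (V n)))" if neV: "V n \<noteq> {}" for n
  proof -
    define W where "W = V n"
    define M where "M = real (card W)"
    have finW: "finite W" using finV by (simp add: W_def)
    have M0: "M > 0" using finW neV by (simp add: M_def W_def card_gt_0_iff)
    obtain u0 where u0: "u0 \<in> W" using neV by (auto simp: W_def)
    define x0 where "x0 = \<xi> n u0"
    have x0X: "x0 \<in> X" using \<xi>X u0 by (simp add: x0_def W_def)
    have WX: "\<xi> n u \<in> X" if "u \<in> W" for u using \<xi>X that by (simp add: W_def)
    define F where "F w = (1 / M) *\<^sub>R (\<Sum>u\<in>W. f (\<xi> n u) w)" for w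
    define D where "D = (1 / M) * (\<Sum>u\<in>W. dist (\<xi> n u) x0)"
    have Fc: "continuous_on UNIV F"
      unfolding F_def
      by (rule continuous_on_scaleR[OF continuous_on_const continuous_on_sum]) (rule fcont[OF WX])
    have FD: "norm (F w - f x0 w) \<le> D" for w
    proof -
      have "(\<Sum>u\<in>W. f x0 w) = M *\<^sub>R f x0 w" by (simp only: sum_constant_scaleR M_def)
      then have S0: "(1 / M) *\<^sub>R (\<Sum>u\<in>W. f x0 w) = f x0 w" using M0 by simp
      have "F w - f x0 w = (1 / M) *\<^sub>R (\<Sum>u\<in>W. f (\<xi> n u) w) - (1 / M) *\<^sub>R (\<Sum>u\<in>W. f x0 w)"
        by (simp only: S0 F_def)
      also have "\<dots> = (1 / M) *\<^sub>R (\<Sum>u\<in>W. f (\<xi> n u) w - f x0 w)"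
        by (simp only: scaleR_right_diff_distrib sum_subtractf)
      finally have "F w - f x0 w = (1 / M) *\<^sub>R (\<Sum>u\<in>W. f (\<xi> n u) w - f x0 w)" .
      then have "norm (F w - f x0 w) = (1 / M) * norm (\<Sum>u\<in>W. f (\<xi> n u) w - f x0 w)"
        using M0 by simp
      also have "\<dots> \<le> (1 / M) * (\<Sum>u\<in>W. norm (f (\<xi> n u) w - f x0 w))"
        using M0 by (intro mult_left_mono norm_sum) auto
      also have "\<dots> \<le> (1 / M) * (\<Sum>u\<in>W. dist (\<xi> n u) x0)"
      proof (rule mult_left_mono[OF sum_mono])
        fix u assume u: "u \<in> W"
        show "norm (f (\<xi> n u) w - f x0 w) \<le> dist (\<xi> n u) x0"
          using lip[OF WX[OF u] x0X, of w] by (simp add: dist_norm)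
      qed (use M0 in simp)
      finally show ?thesis by (simp add: D_def)
    qed
    have "\<exists>w. F w = 0"
      by (rule essential_zero[OF fcont[OF x0X] _ _ Fc FD]) (use assms(4)[OF x0X] in auto)
    then obtain w where Fw: "F w = 0" by blast
    define h where "h i v = f (\<xi> n v) w $ i" for i v
    have sumh: "(\<Sum>v\<in>W. \<bar>h i v\<bar>) \<le> M * K0" for i
    proof -
      have "(\<Sum>v\<in>W. \<bar>h i v - (\<Sum>u\<in>W. h i u) / real (card W)\<bar>) \<le> 2 * real (card W) * ((1 + cc) / cc)"
      proof (rule two_side[OF finW _ cc, where bd = "graph_boundary W (E n)"])
        show "W \<noteq> {}" using neV by (simp add: W_def)
        show "real (card (graph_boundary W (E n) A)) \<ge> cc * real (card A)"
          if "A \<subseteq> W" "real (card A) \<le> real (card W) / 2" for A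
          using expa that by (simp add: W_def)
        show "x \<in> W \<and> x \<notin> A \<and> (\<exists>y\<in>A. \<bar>h i x - h i y\<bar> \<le> 1)"
          if A: "A \<subseteq> W" and x: "x \<in> graph_boundary W (E n) A" for A x
        proof -
          from bd_prop[OF finW A x] obtain y where xW: "x \<in> W" and xA: "x \<notin> A"
            and y: "y \<in> A" and gd: "graph_dist W (E n) x y = 1" by blast
          have yW: "y \<in> W" using y A by blast
          have "\<bar>h i x - h i y\<bar> = \<bar>(f (\<xi> n x) w - f (\<xi> n y) w) $ i\<bar>" by (simp add: h_def)
          also have "\<dots> \<le> norm (f (\<xi> n x) w - f (\<xi> n y) w)" by (rule component_le_norm_cart)
          also have "\<dots> = dist (f (\<xi> n x) w) (f (\<xi> n y) w)" by (simp add: dist_norm)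
          also have "\<dots> \<le> dist (\<xi> n x) (\<xi> n y)" using lip WX xW yW by blast
          also have "\<dots> \<le> graph_dist W (E n) x y" using \<xi>L xW yW by (simp add: W_def)
          finally show ?thesis using gd xW xA y by auto
        qed
      qed
      moreover have "(\<Sum>u\<in>W. h i u) / real (card W) = 0"
      proof -
        have "(\<Sum>u\<in>W. h i u) / real (card W) = F w $ i"
          by (simp add: F_def h_def M_def)
        then show ?thesis using Fw by simp
      qed
      ultimately have "(\<Sum>v\<in>W. \<bar>h i v\<bar>) \<le> 2 * real (card W) * ((1 + cc) / cc)" by simp
      moreover have "2 * real (card W) * ((1 + cc) / cc) = M * K0" by (simp add: M_def K0_def)
      ultimately show ?thesis by linarith
    qed
    define Bad where "Bad i = {v\<in>W. T < \<bar>h i v\<bar>}" for i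
    have cardBad: "real (card (Bad i)) \<le> M * K0 / T" for i
    proof -
      have finB: "finite (Bad i)" using finW by (simp add: Bad_def)
      have "T * real (card (Bad i)) = (\<Sum>v\<in>Bad i. T)" by simp
      also have "\<dots> \<le> (\<Sum>v\<in>Bad i. \<bar>h i v\<bar>)"
        by (intro sum_mono) (auto simp: Bad_def)
      also have "\<dots> \<le> (\<Sum>v\<in>W. \<bar>h i v\<bar>)"
        using finW by (intro sum_mono2) (auto simp: Bad_def)
      also have "\<dots> \<le> M * K0" by (rule sumh)
      finally show ?thesis using T0 by (simp add: field_simps)
    qed
    define B where "B = (\<Union>i. Bad i)"
    have BW: "B \<subseteq> W" by (auto simp: B_def Bad_def)
    have finB: "finite B" using BW finW finite_subset by blast
    have "real (card B) \<le> (\<Sum>i\<in>UNIV. real (card (Bad i)))"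
    proof -
      have "card B \<le> (\<Sum>i\<in>UNIV. card (Bad i))" unfolding B_def by (rule card_UN_le) simp
      then show ?thesis by (metis of_nat_le_iff of_nat_sum)
    qed
    also have "\<dots> \<le> (\<Sum>i\<in>(UNIV::'n set). M * K0 / T)" by (intro sum_mono cardBad)
    also have "\<dots> = N * (M * K0 / T)" by (simp add: N_def)
    also have "\<dots> < M / 2"
    proof -
      have "N * K0 * 2 < T" using NK T4 by linarith
      then have "N * K0 / T < 1 / 2" using T0 by (simp add: field_simps)
      then have "M * (N * K0 / T) < M * (1 / 2)" using M0 by (intro mult_strict_left_mono) auto
      then show ?thesis by (simp add: field_simps)
    qed
    finally have cB: "real (card B) < M / 2" .
    define G where "G = W - B"
    have cG: "real (card G) > M / 2"
    proof -
      have "card G = card W - card B" unfolding G_def using BW finB by (simp add: card_Diff_subset)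
      moreover have "card B \<le> card W" using BW finW by (simp add: card_mono)
      ultimately have "real (card G) = M - real (card B)" by (simp add: M_def of_nat_diff)
      then show ?thesis using cB by simp
    qed
    have Gball: "f (\<xi> n v) w \<in> ball 0 r" if v: "v \<in> G" for v
    proof -
      have hv: "\<bar>h i v\<bar> \<le> T" for i
      proof -
        have "v \<notin> Bad i" "v \<in> W" using v by (auto simp: G_def B_def)
        then show ?thesis by (simp add: Bad_def not_less)
      qed
      have "norm (f (\<xi> n v) w) \<le> (\<Sum>i\<in>UNIV. \<bar>f (\<xi> n v) w $ i\<bar>)" by (rule norm_le_l1_cart)
      also have "\<dots> \<le> (\<Sum>i\<in>(UNIV::'n set). T)" using hv by (intro sum_mono) (simp add: h_def)
      also have "\<dots> = N * T" by (simp add: N_def)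
      finally show ?thesis by (simp add: r_def)
    qed
    have "G \<noteq> {}"
    proof
      assume "G = {}"
      then have "real (card G) = 0" by simp
      then show False using cG M0 by simp
    qed
    then obtain v1 where v1: "v1 \<in> G" by blast
    have GW: "G \<subseteq> W" by (auto simp: G_def)
    have "G \<subseteq> {v \<in> V n. \<xi> n v \<in> ball (\<xi> n v1) r'}"
    proof
      fix v assume v: "v \<in> G"
      have A5: "\<And>x y. x \<in> X \<Longrightarrow> y \<in> X \<Longrightarrow> f x w \<in> ball 0 r \<Longrightarrow> f y w \<in> ball 0 r \<Longrightarrow> dist x y \<le> c r"
        using assms(5)[OF r0, of w] by blast
      have "dist (\<xi> n v) (\<xi> n v1) \<le> c r"
        using GW v v1 by (intro A5 WX Gball) auto
      then have "dist (\<xi> n v1) (\<xi> n v) < r'" by (simp add: r'_def dist_commute)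
      then show "v \<in> {v \<in> V n. \<xi> n v \<in> ball (\<xi> n v1) r'}" using v GW by (auto simp: W_def)
    qed
    then have "card G \<le> card {v \<in> V n. \<xi> n v \<in> ball (\<xi> n v1) r'}"
      using finV by (intro card_mono) auto
    moreover have "real (card {v \<in> V n. \<xi> n v \<in> ball (\<xi> n v1) r'}) < \<rho> r' (real (card (V n)))"
      using \<rho>b[OF r'0 WX[OF GW[THEN subsetD, OF v1]]] by blast
    ultimately show ?thesis using cG by (simp add: M_def W_def)
  qed
  have "eventually (\<lambda>t. \<rho> r' t / t < 1 / 2) at_top"
    using \<rho>lim[OF r'0] by (rule order_tendstoD) simp
  then obtain t0 where t0: "\<And>t. t \<ge> t0 \<Longrightarrow> \<rho> r' t / t < 1 / 2"
    unfolding eventually_at_top_linorder by blast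
  have "eventually (\<lambda>n. nat \<lceil>max t0 1\<rceil> \<le> card (V n)) sequentially"
    using lim unfolding filterlim_at_top by blast
  then obtain n where n: "nat \<lceil>max t0 1\<rceil> \<le> card (V n)"
    unfolding eventually_sequentially by blast
  then have tn: "real (card (V n)) \<ge> max t0 1" by linarith
  then have "V n \<noteq> {}" by auto
  then have k: "real (card (V n)) / 2 < \<rho> r' (real (card (V n)))" by (rule key)
  have q: "\<rho> r' (real (card (V n))) / real (card (V n)) < 1 / 2"
    by (rule t0) (use tn in linarith)
  have tpos: "real (card (V n)) > 0" using tn by linarith
  have "\<rho> r' (real (card (V n))) < 1 / 2 * real (card (V n))"
    using q tpos by (simp only: pos_divide_less_eq)
  with k show False by linarith
qed

end
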